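(* Let $S$ be the Phillips symmetric operator with deficiency indices $\langle2,2\rangle$ in $\mathfrak{H}$, let $J$ be a fundamental symmetry in $\mathfrak{H}$ commuting with $S$, and let $B$ be a $J$-self-adjoint extension of $S$. Then $B$ is similar to a self-adjoint operator in $\mathfrak{H}$ if and only if the spectrum of $B$ is real.
   Context: Phillips symmetric operator: let $U$ be a unitary operator in a Hilbert space $\mathfrak{H}$ which is a bilateral shift with a wandering subspace $W_0$ (the subspaces $U^nW_0$, $n\in\mathbb{Z}$, are mutually orthogonal with orthogonal sum $\mathfrak{H}$); $V=U\upharpoonright(\mathfrak{H}\ominus W_0)$, $S=i(V+I)(V-I)^{-1}$, $\mathcal{D}(S)=\mathcal{R}(V-I)$; its deficiency indices are $\langle\dim W_0,\dim W_0\rangle$, so here $\dim W_0=2$. A fundamental symmetry is a bounded $J$ with $J=J^*$, $J^2=I$; $J$ commutes with $S$ if $J\mathcal{D}(S)\subset\mathcal{D}(S)$ and $JSu=SJu$. A densely defined operator $B$ is $J$-self-adjoint if $B^*J=JB$. $B$ is similar to a self-adjoint operator if there exist a bounded boundedly invertible operator $W$ on $\mathfrak{H}$ and a self-adjoint operator $H$ in $\mathfrak{H}$ with $B=W^{-1}HW$ (in particular $\mathcal{D}(B)=W^{-1}\mathcal{D}(H)$). *)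

theory Defs
  imports "HOL-Analysis.Analysis"
begin

text \<open>A complex Hilbert space is modelled as a real Hilbert space (real inner product,
complete) together with a complex scalar multiplication extending the real one, such that
multiplication by the imaginary unit is isometric. The complex inner product is
recovered from the real one (linear in the first argument).\<close>

class chilbert = real_inner + complete_space +
  fixes scaleC :: "complex \<Rightarrow> 'a \<Rightarrow> 'a"
  assumes scaleC_add_right: "scaleC a (x + y) = scaleC a x + scaleC a y"
    and scaleC_add_left: "scaleC (a + b) x = scaleC a x + scaleC b x"
    and scaleC_scaleC: "scaleC a (scaleC b x) = scaleC (a * b) x"
    and scaleC_one: "scaleC 1 x = x"
    and scaleC_of_real: "scaleC (complex_of_real r) x = scaleR r x"
    and inner_scaleC_ii: "inner (scaleC \<i> x) (scaleC \<i> y) = inner x y"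

definition cinner :: "'a::chilbert \<Rightarrow> 'a \<Rightarrow> complex" where
  "cinner x y = Complex (inner x y) (inner x (scaleC \<i> y))"

definition csubspace :: "'a::chilbert set \<Rightarrow> bool" where
  "csubspace M \<longleftrightarrow> 0 \<in> M \<and> (\<forall>x\<in>M. \<forall>y\<in>M. x + y \<in> M) \<and> (\<forall>c. \<forall>x\<in>M. scaleC c x \<in> M)"

definition ortho_compl :: "'a::chilbert set \<Rightarrow> 'a set" where
  "ortho_compl W = {x. \<forall>w\<in>W. cinner x w = 0}"

definition has_cdim :: "'a::chilbert set \<Rightarrow> nat \<Rightarrow> bool" where
  "has_cdim W n \<longleftrightarrow> (\<exists>e::nat \<Rightarrow> 'a.
      W = {(\<Sum>i<n. scaleC (c i) (e i)) | c. True} \<and>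
      (\<forall>c. (\<Sum>i<n. scaleC (c i) (e i)) = 0 \<longrightarrow> (\<forall>i<n. c i = 0)))"

definition bounded_clinear :: "('a::chilbert \<Rightarrow> 'a) \<Rightarrow> bool" where
  "bounded_clinear f \<longleftrightarrow> bounded_linear f \<and> (\<forall>c x. f (scaleC c x) = scaleC c (f x))"

definition cunitary :: "('a::chilbert \<Rightarrow> 'a) \<Rightarrow> bool" where
  "cunitary U \<longleftrightarrow> bounded_clinear U \<and> bij U \<and> (\<forall>x y. cinner (U x) (U y) = cinner x y)"

definition upow :: "('a \<Rightarrow> 'a) \<Rightarrow> int \<Rightarrow> 'a \<Rightarrow> 'a" where
  "upow U n = (if 0 \<le> n then U ^^ nat n else inv U ^^ nat (- n))"

definition bilateral_shift :: "('a::chilbert \<Rightarrow> 'a) \<Rightarrow> 'a set \<Rightarrow> bool" where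
  "bilateral_shift U W0 \<longleftrightarrow> cunitary U \<and> csubspace W0 \<and> closed W0 \<and>
     (\<forall>m n::int. m \<noteq> n \<longrightarrow> (\<forall>x\<in>W0. \<forall>y\<in>W0. cinner (upow U m x) (upow U n y) = 0)) \<and>
     closure (span (\<Union>n::int. upow U n ` W0)) = UNIV"

definition fundamental_symmetry :: "('a::chilbert \<Rightarrow> 'a) \<Rightarrow> bool" where
  "fundamental_symmetry J \<longleftrightarrow> bounded_clinear J \<and> (\<forall>x. J (J x) = x) \<and>
     (\<forall>x y. cinner (J x) y = cinner x (J y))"

type_synonym 'a lop = "('a \<times> 'a) set"

definition is_op :: "'a::chilbert lop \<Rightarrow> bool" where
  "is_op T \<longleftrightarrow> (0, 0) \<in> T \<and> (\<forall>p\<in>T. \<forall>q\<in>T. p + q \<in> T) \<and>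
     (\<forall>c x y. (x, y) \<in> T \<longrightarrow> (scaleC c x, scaleC c y) \<in> T) \<and>
     (\<forall>y. (0, y) \<in> T \<longrightarrow> y = 0)"

definition dense_op :: "'a::chilbert lop \<Rightarrow> bool" where
  "dense_op T \<longleftrightarrow> is_op T \<and> closure (Domain T) = UNIV"

definition op_adj :: "'a::chilbert lop \<Rightarrow> 'a lop" where
  "op_adj T = {(y, z). \<forall>(x, w)\<in>T. cinner w y = cinner x z}"

definition self_adjoint_op :: "'a::chilbert lop \<Rightarrow> bool" where
  "self_adjoint_op H \<longleftrightarrow> dense_op H \<and> op_adj H = H"

definition op_comp_right :: "'a lop \<Rightarrow> ('a \<Rightarrow> 'a) \<Rightarrow> 'a lop" where
  "op_comp_right T J = {(x, z). (J x, z) \<in> T}"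

definition op_comp_left :: "('a \<Rightarrow> 'a) \<Rightarrow> 'a lop \<Rightarrow> 'a lop" where
  "op_comp_left J T = {(x, J w) | x w. (x, w) \<in> T}"

definition J_self_adjoint :: "('a::chilbert \<Rightarrow> 'a) \<Rightarrow> 'a lop \<Rightarrow> bool" where
  "J_self_adjoint J B \<longleftrightarrow> dense_op B \<and> op_comp_right (op_adj B) J = op_comp_left J B"

definition commutes_with :: "('a \<Rightarrow> 'a) \<Rightarrow> 'a lop \<Rightarrow> bool" where
  "commutes_with J S \<longleftrightarrow> (\<forall>u w. (u, w) \<in> S \<longrightarrow> (J u, J w) \<in> S)"

text \<open>The Phillips symmetric operator S = i(V+I)(V-I)^{-1}, D(S) = R(V-I),
V = U restricted to H minus W0, written as its graph.\<close>
definition phillips_op :: "('a::chilbert \<Rightarrow> 'a) \<Rightarrow> 'a set \<Rightarrow> 'a lop" where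
  "phillips_op U W0 = {(U x - x, scaleC \<i> (U x + x)) | x. x \<in> ortho_compl W0}"

text \<open>Resolvent set and spectrum (lambda is regular iff B - lambda I maps D(B) bijectively
onto the space with bounded inverse).\<close>
definition op_resolvent_set :: "'a::chilbert lop \<Rightarrow> complex set" where
  "op_resolvent_set B = {l. \<exists>R. bounded_clinear R \<and>
      (\<forall>y. (R y, y + scaleC l (R y)) \<in> B) \<and>
      (\<forall>x w. (x, w) \<in> B \<longrightarrow> R (w - scaleC l x) = x)}"

definition op_spectrum :: "'a::chilbert lop \<Rightarrow> complex set" where
  "op_spectrum B = - op_resolvent_set B"

definition similar_to_self_adjoint :: "'a::chilbert lop \<Rightarrow> bool" where
  "similar_to_self_adjoint B \<longleftrightarrow> (\<exists>W H. bounded_clinear W \<and> bij W \<and> bounded_clinear (inv W) \<and>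
      self_adjoint_op H \<and> B = {(x, y). (W x, W y) \<in> H})"

end

theory Submission
  imports Defs
begin

abbreviation II :: "'a::chilbert \<Rightarrow> 'a" where "II x \<equiv> scaleC \<i> x"

lemma scaleC_zero_right[simp]: "scaleC c (0::'a::chilbert) = 0"
  by (metis add_cancel_right_left scaleC_add_right)
lemma scaleC_zero_left[simp]: "scaleC 0 (x::'a::chilbert) = 0"
  by (metis add_cancel_right_left add_0 scaleC_add_left)
lemma scaleC_minus_right: "scaleC c (- x::'a::chilbert) = - scaleC c x"
  by (metis add.inverse_unique add.right_inverse scaleC_add_right scaleC_zero_right)
lemma scaleC_diff_right: "scaleC c (x - y::'a::chilbert) = scaleC c x - scaleC c y"
  by (metis diff_conv_add_uminus scaleC_add_right scaleC_minus_right)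
lemma scaleC_minus_left: "scaleC (- c) (x::'a::chilbert) = - scaleC c x"
  by (metis add.inverse_unique add.right_inverse scaleC_add_left scaleC_zero_left)
lemma scaleC_diff_left: "scaleC (c - d) (x::'a::chilbert) = scaleC c x - scaleC d x"
  by (metis diff_conv_add_uminus scaleC_add_left scaleC_minus_left)
lemma scaleC_ii_ii[simp]: "II (II x) = - (x::'a::chilbert)"
  by (metis scaleC_scaleC scaleC_minus_left scaleC_one mult_minus_right mult_1_right
      complex_i_mult_minus mult.commute)
lemma scaleC_scaleR: "scaleC c (scaleR r x) = scaleR r (scaleC c (x::'a::chilbert))"
  by (metis scaleC_of_real scaleC_scaleC mult.commute)
lemma scaleC_real: "scaleC (of_real r) x = scaleR r (x::'a::chilbert)"
  by (rule scaleC_of_real)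
lemma scaleC_Complex: "scaleC (Complex a b) (x::'a::chilbert) = scaleR a x + scaleR b (II x)"
proof -
  have "Complex a b = of_real a + of_real b * \<i>" by (simp add: complex_eq_iff)
  then show ?thesis by (simp add: scaleC_add_left scaleC_of_real flip: scaleC_scaleC)
qed

lemma inner_ii_left: "inner (II x) y = - inner x (II (y::'a::chilbert))"
  by (metis inner_scaleC_ii scaleC_ii_ii inner_minus_left)
lemma inner_ii_self[simp]: "inner x (II (x::'a::chilbert)) = 0"
  by (metis inner_ii_left inner_commute add.inverse_unique add_eq_0_iff2 neg_equal_zero)
lemma inner_ii_self'[simp]: "inner (II (x::'a::chilbert)) x = 0"
  by (metis inner_ii_self inner_commute)
lemma norm_ii[simp]: "norm (II (x::'a::chilbert)) = norm x"
  by (metis inner_scaleC_ii norm_eq_sqrt_inner)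

lemma norm_scaleC[simp]: "norm (scaleC c (x::'a::chilbert)) = cmod c * norm x"
proof -
  obtain a b where c: "c = Complex a b" by (metis complex.exhaust)
  have "(norm (scaleC c x))^2 = (a^2 + b^2) * (norm x)^2"
    unfolding c scaleC_Complex power2_norm_eq_inner
    by (simp add: inner_add_left inner_add_right inner_commute[of x "II x"] algebra_simps
        power2_eq_square inner_scaleC_ii)
  then have "norm (scaleC c x) = sqrt (a^2+b^2) * norm x"
    by (metis norm_ge_zero real_sqrt_abs real_sqrt_mult real_sqrt_pow2_iff abs_of_nonneg
        power2_eq_square real_sqrt_mult_self)
  then show ?thesis by (simp add: c cmod_def)
qed

lemma bounded_linear_scaleC: "bounded_linear (scaleC c :: 'a::chilbert \<Rightarrow> 'a)"
  by (rule bounded_linear_intro[where K="cmod c"])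
     (auto simp: scaleC_add_right scaleC_scaleR)

lemma cinner_add_left: "cinner (x + y) z = cinner x z + cinner y (z::'a::chilbert)"
  by (simp add: cinner_def inner_add_left complex_eq_iff)
lemma cinner_add_right: "cinner z (x + y) = cinner z x + cinner z (y::'a::chilbert)"
  by (simp add: cinner_def inner_add_right scaleC_add_right complex_eq_iff)
lemma cinner_scaleC_left: "cinner (scaleC c x) y = c * cinner x (y::'a::chilbert)"
proof -
  obtain a b where c: "c = Complex a b" by (metis complex.exhaust)
  show ?thesis unfolding c cinner_def scaleC_Complex
    by (simp add: inner_add_left inner_ii_left complex_eq_iff algebra_simps)
qed
lemma cinner_commute: "cinner y x = cnj (cinner x (y::'a::chilbert))"
  by (simp add: cinner_def complex_eq_iff inner_commute) (metis inner_commute inner_ii_left)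
lemma cinner_scaleC_right: "cinner x (scaleC c y) = cnj c * cinner x (y::'a::chilbert)"
  by (metis cinner_commute cinner_scaleC_left complex_cnj_mult)
lemma cinner_zero_left[simp]: "cinner 0 (x::'a::chilbert) = 0"
  by (simp add: cinner_def complex_eq_iff)
lemma cinner_zero_right[simp]: "cinner x (0::'a::chilbert) = 0"
  by (simp add: cinner_def complex_eq_iff)
lemma cinner_minus_left: "cinner (- x) y = - cinner x (y::'a::chilbert)"
  by (metis add.right_inverse add_eq_0_iff cinner_add_left cinner_zero_left)
lemma cinner_minus_right: "cinner y (- x) = - cinner y (x::'a::chilbert)"
  by (metis add.right_inverse add_eq_0_iff cinner_add_right cinner_zero_right)
lemma cinner_diff_left: "cinner (x - y) z = cinner x z - cinner y (z::'a::chilbert)"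
  by (metis diff_conv_add_uminus cinner_add_left cinner_minus_left)
lemma cinner_diff_right: "cinner z (x - y) = cinner z x - cinner z (y::'a::chilbert)"
  by (metis diff_conv_add_uminus cinner_add_right cinner_minus_right)
lemma cinner_self: "cinner x x = of_real ((norm (x::'a::chilbert))^2)"
  by (simp add: cinner_def complex_eq_iff power2_norm_eq_inner)
lemma cinner_self_eq_0[simp]: "cinner x x = 0 \<longleftrightarrow> (x::'a::chilbert) = 0"
  by (simp add: cinner_self)
lemma Re_cinner: "Re (cinner x y) = inner x (y::'a::chilbert)"
  by (simp add: cinner_def)
lemma cinner_scaleR_left: "cinner (scaleR r x) y = of_real r * cinner x (y::'a::chilbert)"
  by (metis cinner_scaleC_left scaleC_of_real)
lemma cinner_scaleR_right: "cinner x (scaleR r y) = of_real r * cinner x (y::'a::chilbert)"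
  by (metis cinner_scaleC_right scaleC_of_real complex_cnj_complex_of_real)

lemma cinner_Cauchy_Schwarz: "cmod (cinner x y) \<le> norm x * norm (y::'a::chilbert)"
proof (cases "cinner x y = 0")
  case True then show ?thesis by simp
next
  case False
  let ?c = "cinner x y"
  have "cinner (scaleC (cnj ?c) x) y = of_real ((cmod ?c)^2)"
    unfolding cinner_scaleC_left by (subst mult.commute) (rule complex_norm_square[symmetric])
  then have "(cmod ?c)^2 = inner (scaleC (cnj ?c) x) y"
    by (metis Re_cinner Re_complex_of_real)
  also have "\<dots> \<le> norm (scaleC (cnj ?c) x) * norm y" by (rule norm_cauchy_schwarz)
  also have "\<dots> = cmod ?c * (norm x * norm y)" by simp
  finally have "cmod ?c * cmod ?c \<le> cmod ?c * (norm x * norm y)" by (simp add: power2_eq_square)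
  then show ?thesis using False by simp
qed

lemma bounded_linear_cinner_right: "bounded_linear (\<lambda>y. cinner x (y::'a::chilbert))"
  by (rule bounded_linear_intro[where K="norm x"])
     (auto simp: cinner_add_right cinner_scaleR_right scaleR_conv_of_real, metis cinner_Cauchy_Schwarz mult.commute)
lemma bounded_linear_cinner_left: "bounded_linear (\<lambda>y. cinner (y::'a::chilbert) x)"
  by (rule bounded_linear_intro[where K="norm x"])
     (auto simp: cinner_add_left cinner_scaleR_left scaleR_conv_of_real, metis cinner_Cauchy_Schwarz mult.commute)

lemma cinner_eq_zero_all: "(\<And>y. cinner x y = 0) \<Longrightarrow> (x::'a::chilbert) = 0"
  using cinner_self_eq_0 by blast
lemma cinner_ext: "(\<And>y. cinner x y = cinner z y) \<Longrightarrow> (x::'a::chilbert) = z"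
  by (metis cinner_diff_left cinner_eq_zero_all eq_iff_diff_eq_0)
lemma cinner_ext_right: "(\<And>y. cinner y x = cinner y z) \<Longrightarrow> (x::'a::chilbert) = z"
  by (metis cinner_commute cinner_ext)



lemma parallelogram:
  fixes x a b :: "'a::real_inner"
  shows "(norm (a - b))^2 = 2*(norm (x - a))^2 + 2*(norm (x - b))^2 - 4*(norm (x - scaleR (1/2) (a + b)))^2"
  unfolding power2_norm_eq_inner
  by (simp add: inner_diff_left inner_diff_right inner_add_left inner_add_right inner_commute algebra_simps)

lemma nearest_point_exists:
  fixes M :: "'a::{real_inner,complete_space} set"
  assumes cl: "closed M" and sub: "subspace M"
  shows "\<exists>p\<in>M. \<forall>m\<in>M. norm (x - p) \<le> norm (x - m)"
proof -
  define N where "N = (\<lambda>m. norm (x - m)) ` M"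
  define d where "d = Inf N"
  have N0: "N \<noteq> {}" using sub unfolding N_def by (auto simp: subspace_def)
  have bdd: "bdd_below N" unfolding N_def by (rule bdd_belowI[of _ 0]) auto
  have dle: "d \<le> norm (x - m)" if "m \<in> M" for m
    unfolding d_def N_def using bdd that N_def by (auto intro!: cInf_lower)
  have d0: "0 \<le> d" unfolding d_def using N0 by (intro cInf_greatest) (auto simp: N_def)
  have "\<exists>m\<in>M. norm (x - m) < d + 1 / Suc n" for n
  proof -
    have "Inf N < d + 1/Suc n" unfolding d_def by simp
    from cInf_lessD[OF N0 this] show ?thesis unfolding N_def by auto
  qed
  then obtain f where fM: "\<And>n. f n \<in> M" and fd: "\<And>n. norm (x - f n) < d + 1 / Suc n"
    by metis
  have sq: "(norm (x - f n))^2 \<le> d^2 + (2*d+1) / Suc n" for n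
  proof -
    have e: "0 < 1/Suc n" "1/Suc n \<le> (1::real)" by auto
    have "(norm (x - f n))^2 \<le> (d + 1/Suc n)^2"
      using fd[of n] by (intro power_mono) auto
    also have "\<dots> = d^2 + 2*d*(1/Suc n) + (1/Suc n)*(1/Suc n)" by (simp add: power2_eq_square algebra_simps)
    also have "\<dots> \<le> d^2 + 2*d*(1/Suc n) + 1*(1/Suc n)"
      using e by (intro add_left_mono mult_right_mono) auto
    finally show ?thesis by (simp add: algebra_simps add_divide_distrib)
  qed
  have mid: "scaleR (1/2) (a + b) \<in> M" if "a \<in> M" "b \<in> M" for a b
    using sub that by (simp add: subspace_add subspace_mul)
  have "Cauchy f"
  proof (rule CauchyI)
    fix e :: real assume e: "0 < e"
    obtain K :: nat where K: "4*(2*d+1) / e^2 < K" using reals_Archimedean2 by blast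
    show "\<exists>K. \<forall>m\<ge>K. \<forall>n\<ge>K. norm (f m - f n) < e"
    proof (intro exI allI impI)
      fix m n assume mK: "K \<le> m" and nK: "K \<le> n"
      have "(norm (f m - f n))^2 = 2*(norm (x - f m))^2 + 2*(norm (x - f n))^2 - 4*(norm (x - scaleR (1/2) (f m + f n)))^2"
        by (rule parallelogram)
      also have "\<dots> \<le> 2*(d^2 + (2*d+1) / Suc m) + 2*(d^2 + (2*d+1) / Suc n) - 4*d^2"
      proof -
        have "d \<le> norm (x - scaleR (1/2) (f m + f n))" by (rule dle[OF mid[OF fM fM]])
        then have "d^2 \<le> (norm (x - scaleR (1/2) (f m + f n)))^2" using d0 by (intro power_mono) auto
        then show ?thesis using sq[of m] sq[of n] by (smt (verit))
      qed
      also have "\<dots> = 2*(2*d+1) / Suc m + 2*(2*d+1) / Suc n" by simp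
      also have "\<dots> \<le> 2*(2*d+1) / Suc K + 2*(2*d+1) / Suc K"
        using d0 mK nK by (intro add_mono divide_left_mono) auto
      also have "\<dots> = 4*(2*d+1) / Suc K" by simp
      also have "\<dots> < e^2"
      proof -
        have "4*(2*d+1) < e^2 * K" using K e by (simp add: field_simps)
        also have "\<dots> \<le> e^2 * Suc K" using e by (intro mult_left_mono) auto
        finally show ?thesis using e by (simp add: field_simps)
      qed
      finally have "(norm (f m - f n))^2 < e^2" .
      then show "norm (f m - f n) < e" using e by (simp add: power_less_imp_less_base)
    qed
  qed
  then obtain p where p: "f \<longlonglongrightarrow> p" using Cauchy_convergent_iff convergentD by blast
  have pM: "p \<in> M" using closed_sequentially[OF cl fM p] .
  have "norm (x - p) \<le> d"
  proof (rule ccontr)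
    assume "\<not> norm (x - p) \<le> d"
    then have gap: "0 < norm (x - p) - d" by simp
    have "(\<lambda>n. norm (x - f n)) \<longlonglongrightarrow> norm (x - p)" by (intro tendsto_intros p)
    then have "\<forall>\<^sub>F n in sequentially. dist (norm (x - f n)) (norm (x - p)) < (norm (x - p) - d)/2"
      by (rule tendstoD) (use gap in simp)
    moreover have "\<forall>\<^sub>F n in sequentially. 1 / Suc n < (norm (x - p) - d)/2"
    proof -
      have "(\<lambda>n. 1 / real (Suc n)) \<longlonglongrightarrow> 0" by (rule LIMSEQ_Suc[OF lim_inverse_n'])
      from tendstoD[OF this, of "(norm (x - p) - d)/2"] gap show ?thesis
        by (auto simp: dist_real_def elim!: eventually_mono)
    qed
    ultimately have "\<forall>\<^sub>F n in sequentially. False"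
    proof (rule eventually_elim2)
      fix n assume a: "dist (norm (x - f n)) (norm (x - p)) < (norm (x - p) - d) / 2"
        and b: "1 / Suc n < (norm (x - p) - d) / 2"
      show False using a b fd[of n] gap unfolding dist_real_def abs_less_iff by argo
    qed
    then show False by simp
  qed
  then show ?thesis using pM dle by force
qed

lemma proj_orth_real:
  fixes M :: "'a::{real_inner,complete_space} set"
  assumes cl: "closed M" and sub: "subspace M"
  shows "\<exists>p\<in>M. \<forall>m\<in>M. inner (x - p) m = 0"
proof -
  obtain p where pM: "p \<in> M" and near: "\<forall>m\<in>M. norm (x - p) \<le> norm (x - m)"
    using nearest_point_exists[OF cl sub] by blast
  have "inner (x - p) m = 0" if mM: "m \<in> M" for m
  proof (rule ccontr)
    let ?c = "inner (x - p) m"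
    assume c: "?c \<noteq> 0"
    then have m0: "m \<noteq> 0" by auto
    define t where "t = ?c / inner m m"
    have "p + scaleR t m \<in> M" using sub pM mM by (simp add: subspace_add subspace_mul)
    then have "(norm (x - p))^2 \<le> (norm ((x - p) - scaleR t m))^2"
      using near by (simp add: algebra_simps)
    also have "\<dots> = (norm (x - p))^2 - 2*t*?c + t^2 * inner m m"
      unfolding power2_norm_eq_inner by (simp add: inner_diff_left inner_diff_right inner_commute algebra_simps power2_eq_square)
    also have "\<dots> = (norm (x - p))^2 - ?c^2 / inner m m"
      using m0 by (simp add: t_def power2_eq_square field_simps)
    finally have "?c^2 / inner m m \<le> 0" by simp
    moreover have "0 < ?c^2 / inner m m" using c m0 by (intro divide_pos_pos) auto
    ultimately show False by simp
  qed
  then show ?thesis using pM by blast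
qed

lemma csubspace_subspace: "csubspace M \<Longrightarrow> subspace (M::'a::chilbert set)"
  unfolding csubspace_def subspace_def by (metis scaleC_of_real)

lemma csubspaceD:
  assumes "csubspace M"
  shows "0 \<in> M" "x \<in> M \<Longrightarrow> y \<in> M \<Longrightarrow> x + y \<in> M" "x \<in> M \<Longrightarrow> scaleC c x \<in> M"
    "x \<in> M \<Longrightarrow> - x \<in> M" "x \<in> M \<Longrightarrow> y \<in> M \<Longrightarrow> x - y \<in> M"
  using assms unfolding csubspace_def
  apply auto
  apply (metis scaleC_minus_left scaleC_one)
  by (metis diff_conv_add_uminus scaleC_minus_left scaleC_one)

lemma proj_exists:
  fixes M :: "'a::chilbert set"
  assumes cl: "closed M" and sub: "csubspace M"
  shows "\<exists>p\<in>M. x - p \<in> ortho_compl M"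
proof -
  obtain p where pM: "p \<in> M" and o: "\<forall>m\<in>M. inner (x - p) m = 0"
    using proj_orth_real[OF cl csubspace_subspace[OF sub]] by blast
  have "cinner (x - p) m = 0" if "m \<in> M" for m
    using o that csubspaceD(3)[OF sub, of m \<i>] by (simp add: cinner_def complex_eq_iff)
  then show ?thesis using pM unfolding ortho_compl_def by blast
qed

lemma ortho_compl_orth: "x \<in> ortho_compl M \<Longrightarrow> m \<in> M \<Longrightarrow> cinner x m = 0"
  unfolding ortho_compl_def by blast
lemma ortho_compl_orth': "x \<in> ortho_compl M \<Longrightarrow> m \<in> M \<Longrightarrow> cinner m x = 0"
  unfolding ortho_compl_def by (metis (mono_tags) cinner_commute complex_cnj_zero mem_Collect_eq)

lemma ortho_compl_csubspace: "csubspace (ortho_compl (M::'a::chilbert set))"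
  unfolding csubspace_def ortho_compl_def by (auto simp: cinner_add_left cinner_scaleC_left)

lemma double_ortho:
  fixes M :: "'a::chilbert set"
  assumes cl: "closed M" and sub: "csubspace M"
    and z: "\<And>v. v \<in> ortho_compl M \<Longrightarrow> cinner z v = 0"
  shows "z \<in> M"
proof -
  obtain p where pM: "p \<in> M" and r: "z - p \<in> ortho_compl M" using proj_exists[OF cl sub] by blast
  have "cinner (z - p) (z - p) = cinner z (z - p) - cinner p (z - p)" by (rule cinner_diff_left)
  also have "\<dots> = 0" using z[OF r] ortho_compl_orth'[OF r pM] by simp
  finally have "z = p" by simp
  then show ?thesis using pM by simp
qed

lemma closure_csubspace:
  fixes M :: "'a::chilbert set"
  assumes sub: "csubspace M"
  shows "csubspace (closure M)"
  unfolding csubspace_def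
proof (intro conjI ballI allI)
  show "0 \<in> closure M" using csubspaceD(1)[OF sub] closure_subset by blast
next
  fix x y assume "x \<in> closure M" "y \<in> closure M"
  then obtain f g where f: "\<And>n. f n \<in> M" "f \<longlonglongrightarrow> x" and g: "\<And>n. g n \<in> M" "g \<longlonglongrightarrow> y"
    unfolding closure_sequential by metis
  have "(\<lambda>n. f n + g n) \<longlonglongrightarrow> x + y" by (intro tendsto_add f g)
  moreover have "\<And>n. f n + g n \<in> M" using f g csubspaceD(2)[OF sub] by blast
  ultimately show "x + y \<in> closure M" unfolding closure_sequential by (intro exI[of _ "\<lambda>n. f n + g n"]) auto
next
  fix c and x :: 'a assume "x \<in> closure M"
  then have "scaleC c x \<in> scaleC c ` closure M" by blast
  also have "\<dots> \<subseteq> closure (scaleC c ` M)"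
    by (rule closure_bounded_linear_image_subset[OF bounded_linear_scaleC])
  also have "\<dots> \<subseteq> closure M" using csubspaceD(3)[OF sub] by (intro closure_mono) blast
  finally show "scaleC c x \<in> closure M" .
qed

lemma dense_criterion:
  fixes M :: "'a::chilbert set"
  assumes sub: "csubspace M" and orth: "\<And>y. (\<And>m. m \<in> M \<Longrightarrow> cinner m y = 0) \<Longrightarrow> y = 0"
  shows "closure M = UNIV"
proof -
  have "y \<in> closure M" for y
  proof -
    obtain p where pM: "p \<in> closure M" and r: "y - p \<in> ortho_compl (closure M)"
      using proj_exists[OF closed_closure closure_csubspace[OF sub]] by blast
    have "y - p = 0"
      by (rule orth) (meson closure_subset ortho_compl_orth' r subsetD)
    then show ?thesis using pM by simp
  qed
  then show ?thesis by blast
qed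



lemma bcl_linear: "bounded_clinear f \<Longrightarrow> bounded_linear f"
  unfolding bounded_clinear_def by blast
lemma bcl_scaleC: "bounded_clinear f \<Longrightarrow> f (scaleC c x) = scaleC c (f x)"
  unfolding bounded_clinear_def by blast
lemma bcl_add: "bounded_clinear f \<Longrightarrow> f (x + y) = f x + f y"
  using bcl_linear linear_add bounded_linear.linear by blast
lemma bcl_diff: "bounded_clinear f \<Longrightarrow> f (x - y) = f x - f y"
  using bcl_linear linear_diff bounded_linear.linear by blast
lemma bcl_minus: "bounded_clinear f \<Longrightarrow> f (- x) = - f x"
  using bcl_linear linear_neg bounded_linear.linear by blast
lemma bcl_zero: "bounded_clinear f \<Longrightarrow> f 0 = 0"
  using bcl_linear linear_0 bounded_linear.linear by blast
lemma bcl_scaleR: "bounded_clinear f \<Longrightarrow> f (scaleR r x) = scaleR r (f x)"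
  using bcl_linear linear_scale bounded_linear.linear by blast
lemma bcl_sum: "bounded_clinear f \<Longrightarrow> f (sum g A) = sum (\<lambda>i. f (g i)) A"
  using bcl_linear linear_sum bounded_linear.linear by blast
lemma bcl_bound: "bounded_clinear f \<Longrightarrow> \<exists>K>0. \<forall>x. norm (f x) \<le> norm x * K"
  using bcl_linear bounded_linear.pos_bounded by blast
lemma bcl_comp: "bounded_clinear f \<Longrightarrow> bounded_clinear g \<Longrightarrow> bounded_clinear (\<lambda>x. f (g x))"
  unfolding bounded_clinear_def by (simp add: bounded_linear_compose[of f g])
lemma bcl_id: "bounded_clinear (\<lambda>x::'a::chilbert. x)"
  unfolding bounded_clinear_def by (simp add: bounded_linear_ident)
lemma bcl_scaleC_op: "bounded_clinear (scaleC c :: 'a::chilbert \<Rightarrow> 'a)"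
  unfolding bounded_clinear_def by (simp add: bounded_linear_scaleC scaleC_scaleC mult.commute)
lemma bcl_add_op: "bounded_clinear f \<Longrightarrow> bounded_clinear g \<Longrightarrow> bounded_clinear (\<lambda>x. f x + g x)"
  unfolding bounded_clinear_def by (simp add: bounded_linear_add scaleC_add_right)
lemma bcl_diff_op: "bounded_clinear f \<Longrightarrow> bounded_clinear g \<Longrightarrow> bounded_clinear (\<lambda>x. f x - g x)"
  unfolding bounded_clinear_def by (simp add: bounded_linear_sub scaleC_diff_right)

lemma bcl_intro:
  fixes f :: "'a::chilbert \<Rightarrow> 'a"
  assumes add: "\<And>x y. f (x + y) = f x + f y" and sc: "\<And>c x. f (scaleC c x) = scaleC c (f x)"
    and bd: "\<And>x. norm (f x) \<le> norm x * K"
  shows "bounded_clinear f"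
  unfolding bounded_clinear_def
  by (auto intro!: bounded_linear_intro[where K=K] simp: add bd sc simp flip: scaleC_of_real)

lemma bcl_inv:
  fixes f :: "'a::chilbert \<Rightarrow> 'a"
  assumes f: "bounded_clinear f" and b: "bij f" and bd: "\<And>x. norm x \<le> norm (f x) * K"
  shows "bounded_clinear (inv f)"
proof (rule bcl_intro[where K=K])
  have fi: "f (inv f y) = y" for y using b by (simp add: bij_is_surj surj_f_inv_f)
  have if_: "inv f (f y) = y" for y using b by (simp add: bij_is_inj)
  show "inv f (x + y) = inv f x + inv f y" for x y
    by (metis bcl_add[OF f] fi if_)
  show "inv f (scaleC c x) = scaleC c (inv f x)" for c x
    by (metis bcl_scaleC[OF f] fi if_)
  show "norm (inv f x) \<le> norm x * K" for x using bd[of "inv f x"] fi by simp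
qed

section \<open>Unitary operators\<close>

locale unitary =
  fixes U :: "'a::chilbert \<Rightarrow> 'a"
  assumes cu: "cunitary U"
begin

lemma bcl: "bounded_clinear U" and bij: "bij U" and cinner_U: "cinner (U x) (U y) = cinner x y"
  using cu unfolding cunitary_def by auto

lemma norm_U[simp]: "norm (U x) = norm x"
proof -
  have "(norm (U x))^2 = (norm x)^2" using cinner_U[of x x] by (metis cinner_self of_real_eq_iff)
  then show ?thesis by (simp add: power2_eq_iff_nonneg)
qed

lemma U_inv[simp]: "U (inv U x) = x" using bij by (simp add: bij_is_surj surj_f_inv_f)
lemma inv_U[simp]: "inv U (U x) = x" using bij by (simp add: bij_is_inj)

lemma bcl_inv_U: "bounded_clinear (inv U)"
  by (rule bcl_inv[OF bcl bij, where K=1]) simp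

lemma cinner_invU: "cinner (inv U x) y = cinner x (U y)"
  by (metis U_inv cinner_U)
lemma cinner_invU': "cinner x (inv U y) = cinner (U x) y"
  by (metis U_inv cinner_U)

lemma norm_inv_U[simp]: "norm (inv U x) = norm x" by (metis U_inv norm_U)

lemma unitary_inv: "cunitary (inv U)"
  unfolding cunitary_def using bcl_inv_U bij bij_imp_bij_inv cinner_invU by fastforce

lemma upow_Suc: "upow U (a + 1) x = U (upow U a x)"
proof (cases "0 \<le> a")
  case True
  then have "nat (a + 1) = Suc (nat a)" by simp
  then show ?thesis using True by (simp add: upow_def)
next
  case False
  then have "nat (- a) = Suc (nat (- (a + 1)))" by simp
  then show ?thesis using False by (simp add: upow_def)
qed

lemma upow_pred: "upow U (a - 1) x = inv U (upow U a x)"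
  using upow_Suc[of "a - 1" x] by simp

lemma upow_0[simp]: "upow U 0 x = x" by (simp add: upow_def)
lemma upow_1[simp]: "upow U 1 x = U x" using upow_Suc[of 0 x] by simp
lemma upow_m1[simp]: "upow U (-1) x = inv U x" using upow_pred[of 0 x] by simp

lemma upow_add: "upow U a (upow U b x) = upow U (a + b) x"
proof (induction a rule: int_induct[where k=0])
  case base then show ?case by simp
next
  case (step1 i) then show ?case using upow_Suc by (metis add.commute add.left_commute)
next
  case (step2 i) then show ?case using upow_pred by (metis add.commute add_diff_eq)
qed

lemma upow_cancel[simp]: "upow U (- n) (upow U n x) = x" "upow U n (upow U (- n) x) = x"
  by (simp_all add: upow_add)

lemma upow_unitary: "cunitary (upow U n)"
proof (induction n rule: int_induct[where k=0])
  case base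
  have "upow U 0 = (\<lambda>x. x)" by (rule ext) simp
  then show ?case by (simp add: cunitary_def bcl_id bij_id[unfolded id_def])
next
  case (step1 i)
  have e: "upow U (i + 1) = (\<lambda>x. U (upow U i x))" by (rule ext) (rule upow_Suc)
  from step1 show ?case unfolding e cunitary_def
    by (auto intro: bcl_comp[OF bcl] bij_comp[unfolded comp_def] simp: cinner_U bij)
next
  case (step2 i)
  have e: "upow U (i - 1) = (\<lambda>x. inv U (upow U i x))" by (rule ext) (rule upow_pred)
  from step2 show ?case unfolding e cunitary_def
    using bcl_inv_U bij_imp_bij_inv[OF bij] cinner_invU
    by (auto intro: bcl_comp bij_comp[unfolded comp_def] simp: cinner_invU)
qed

end

lemma unitary_upow: "unitary U \<Longrightarrow> unitary (upow U n)"
  by (simp add: unitary.intro unitary.upow_unitary)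



section \<open>Graph operators\<close>

lemma scaleC_m1: "scaleC (-1) x = - (x::'a::chilbert)"
  by (simp add: scaleC_minus_left scaleC_one)

lemma op_zero: "is_op T \<Longrightarrow> (0,0) \<in> T" unfolding is_op_def by blast
lemma op_add: "is_op T \<Longrightarrow> (a,b) \<in> T \<Longrightarrow> (c,d) \<in> T \<Longrightarrow> (a + c, b + d) \<in> T"
  unfolding is_op_def by (metis add_Pair)
lemma op_scale: "is_op T \<Longrightarrow> (a,b) \<in> T \<Longrightarrow> (scaleC c a, scaleC c b) \<in> T"
  unfolding is_op_def by blast
lemma op_neg: "is_op T \<Longrightarrow> (a,b) \<in> T \<Longrightarrow> (- a, - b) \<in> T"
  using op_scale[of T a b "-1"] by (simp add: scaleC_m1)
lemma op_diff: "is_op T \<Longrightarrow> (a,b) \<in> T \<Longrightarrow> (c,d) \<in> T \<Longrightarrow> (a - c, b - d) \<in> T"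
  using op_add[of T a b "-c" "-d"] op_neg[of T c d] by simp
lemma op_func: "is_op T \<Longrightarrow> (a,b) \<in> T \<Longrightarrow> (a,b') \<in> T \<Longrightarrow> b = (b'::'a::chilbert)"
proof -
  assume T: "is_op T" "(a,b) \<in> T" "(a,b') \<in> T"
  then have "(0, b - b') \<in> T" using op_diff[of T a b a b'] by simp
  then have "b - b' = 0" using T(1) unfolding is_op_def by blast
  then show ?thesis by simp
qed

lemma adj_seq_closed:
  assumes "\<And>n. (x n, w n) \<in> op_adj T" "x \<longlonglongrightarrow> a" "w \<longlonglongrightarrow> b"
  shows "(a, b) \<in> op_adj (T::'a::chilbert lop)"
  unfolding op_adj_def
proof (clarsimp)
  fix u v assume uv: "(u, v) \<in> T"
  have e: "cinner v (x n) = cinner u (w n)" for n using assms(1)[of n] uv unfolding op_adj_def by auto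
  have "(\<lambda>n. cinner v (x n)) \<longlonglongrightarrow> cinner v a"
    by (rule bounded_linear.tendsto[OF bounded_linear_cinner_right assms(2)])
  moreover have "(\<lambda>n. cinner v (x n)) \<longlonglongrightarrow> cinner u b"
    unfolding e by (rule bounded_linear.tendsto[OF bounded_linear_cinner_right assms(3)])
  ultimately show "cinner v a = cinner u b" by (rule LIMSEQ_unique)
qed

section \<open>Self-adjoint operators have real spectrum\<close>

lemma sa_resolvent:
  fixes H :: "'a::chilbert lop"
  assumes sa: "self_adjoint_op H" and l: "Im l \<noteq> 0"
  shows "l \<in> op_resolvent_set H"
proof -
  have op: "is_op H" and adj: "op_adj H = H" using sa unfolding self_adjoint_op_def dense_op_def by auto
  have real: "Im (cinner w x) = 0" if "(x, w) \<in> H" for x w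
  proof -
    have "(x, w) \<in> op_adj H" using adj that by simp
    then have "cinner w x = cinner x w" using that unfolding op_adj_def by auto
    then show ?thesis by (metis cinner_commute Reals_cnj_iff complex_is_Real_iff)
  qed
  have bound: "\<bar>Im k\<bar> * norm x \<le> norm (w - scaleC k x)" if "(x, w) \<in> H" for x w k
  proof -
    have "Im (cinner (w - scaleC k x) x) = - Im k * (norm x)^2"
      using real[OF that] by (simp add: cinner_diff_left cinner_scaleC_left cinner_self)
    then have "\<bar>Im k\<bar> * (norm x)^2 = \<bar>Im (cinner (w - scaleC k x) x)\<bar>" by (simp add: abs_mult)
    also have "\<dots> \<le> cmod (cinner (w - scaleC k x) x)" by (rule abs_Im_le_cmod)
    also have "\<dots> \<le> norm (w - scaleC k x) * norm x" by (rule cinner_Cauchy_Schwarz)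
    finally have "(\<bar>Im k\<bar> * norm x) * norm x \<le> norm (w - scaleC k x) * norm x"
      by (simp add: power2_eq_square mult.assoc)
    then show ?thesis by (cases "norm x = 0") (auto simp: mult_le_cancel_right)
  qed
  have lpos: "0 < \<bar>Im l\<bar>" using l by simp
  define Rg where "Rg = {w - scaleC l x | x w. (x, w) \<in> H}"
  have Rg_sub: "csubspace Rg"
    unfolding csubspace_def Rg_def
  proof (intro conjI allI ballI)
    have "(0::'a) = 0 - scaleC l 0" by simp
    then show "0 \<in> {w - scaleC l x |x w. (x, w) \<in> H}" using op_zero[OF op] by blast
  next
    fix a b assume "a \<in> {w - scaleC l x |x w. (x, w) \<in> H}" "b \<in> {w - scaleC l x |x w. (x, w) \<in> H}"
    then obtain x w x' w' where "(x,w) \<in> H" "(x',w') \<in> H" "a = w - scaleC l x" "b = w' - scaleC l x'" by blast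
    then show "a + b \<in> {w - scaleC l x |x w. (x, w) \<in> H}"
      by (intro CollectI exI[of _ "x + x'"] exI[of _ "w + w'"]) (auto simp: op_add[OF op] scaleC_add_right)
  next
    fix c a assume "a \<in> {w - scaleC l x |x w. (x, w) \<in> H}"
    then obtain x w where "(x,w) \<in> H" "a = w - scaleC l x" by blast
    then show "scaleC c a \<in> {w - scaleC l x |x w. (x, w) \<in> H}"
      by (intro CollectI exI[of _ "scaleC c x"] exI[of _ "scaleC c w"])
        (auto simp: op_scale[OF op] scaleC_diff_right scaleC_scaleC mult.commute)
  qed
  have Rg_closed: "closed Rg"
    unfolding closed_sequential_limits
  proof (intro allI impI)
    fix y and y0 assume "(\<forall>n. y n \<in> Rg) \<and> y \<longlonglongrightarrow> y0"
    then have yR: "\<And>n. y n \<in> Rg" and ylim: "y \<longlonglongrightarrow> y0" by auto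
    have "\<forall>n. \<exists>p. p \<in> H \<and> y n = snd p - scaleC l (fst p)" using yR unfolding Rg_def by force
    then obtain P where P: "\<forall>n. P n \<in> H \<and> y n = snd (P n) - scaleC l (fst (P n))"
      using choice[of "\<lambda>n p. p \<in> H \<and> y n = snd p - scaleC l (fst p)"] by blast
    define x where "x n = fst (P n)" for n
    define w where "w n = snd (P n)" for n
    have xw: "\<And>n. (x n, w n) \<in> H" "\<And>n. y n = w n - scaleC l (x n)"
      using P unfolding x_def w_def by auto
    have "Cauchy x"
    proof (rule CauchyI)
      fix e :: real assume e: "0 < e"
      have "Cauchy y" using ylim by (rule LIMSEQ_imp_Cauchy)
      then obtain M where M: "\<forall>m\<ge>M. \<forall>n\<ge>M. norm (y m - y n) < e * \<bar>Im l\<bar>"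
        using CauchyD[of y "e * \<bar>Im l\<bar>"] e lpos by auto
      show "\<exists>M. \<forall>m\<ge>M. \<forall>n\<ge>M. norm (x m - x n) < e"
      proof (intro exI allI impI)
        fix m n assume "M \<le> m" "M \<le> n"
        have "\<bar>Im l\<bar> * norm (x m - x n) \<le> norm ((w m - w n) - scaleC l (x m - x n))"
          by (rule bound) (rule op_diff[OF op xw(1) xw(1)])
        also have "(w m - w n) - scaleC l (x m - x n) = y m - y n"
          using xw(2) by (simp add: scaleC_diff_right)
        finally have 1: "\<bar>Im l\<bar> * norm (x m - x n) \<le> norm (y m - y n)" .
        have 2: "norm (y m - y n) < e * \<bar>Im l\<bar>" using M \<open>M \<le> m\<close> \<open>M \<le> n\<close> by blast
        from 1 2 have "\<bar>Im l\<bar> * norm (x m - x n) < e * \<bar>Im l\<bar>" by linarith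
        then show "norm (x m - x n) < e" using lpos by (simp add: mult.commute)
      qed
    qed
    then obtain x0 where xlim: "x \<longlonglongrightarrow> x0" using Cauchy_convergent_iff convergentD by blast
    have wlim: "w \<longlonglongrightarrow> y0 + scaleC l x0"
    proof -
      have "(\<lambda>n. y n + scaleC l (x n)) \<longlonglongrightarrow> y0 + scaleC l x0"
        by (intro tendsto_add ylim bounded_linear.tendsto[OF bounded_linear_scaleC xlim])
      then show ?thesis using xw(2) by simp
    qed
    have "(x0, y0 + scaleC l x0) \<in> H"
      using adj_seq_closed[of x w H x0] xw(1) adj xlim wlim by auto
    moreover have "y0 = (y0 + scaleC l x0) - scaleC l x0" by simp
    ultimately show "y0 \<in> Rg" unfolding Rg_def by blast
  qed
  have Rg_all: "y \<in> Rg" for y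
  proof -
    obtain p where pR: "p \<in> Rg" and r: "y - p \<in> ortho_compl Rg" using proj_exists[OF Rg_closed Rg_sub] by blast
    let ?r = "y - p"
    have "(?r, scaleC (cnj l) ?r) \<in> op_adj H"
      unfolding op_adj_def
    proof (clarsimp)
      fix x w assume xw: "(x, w) \<in> H"
      then have "w - scaleC l x \<in> Rg" unfolding Rg_def by blast
      then have "cinner (w - scaleC l x) ?r = 0" using ortho_compl_orth'[OF r] by blast
      then show "cinner w ?r = cinner x (scaleC (cnj l) ?r)"
        by (simp add: cinner_diff_left cinner_scaleC_left cinner_scaleC_right)
    qed
    then have "(?r, scaleC (cnj l) ?r) \<in> H" using adj by simp
    from bound[OF this, of "cnj l"] have "\<bar>Im l\<bar> * norm ?r \<le> 0" by simp
    then have "?r = 0" using lpos by (simp add: mult_le_0_iff)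
    then show ?thesis using pR by simp
  qed
  have ex: "\<exists>x w. (x, w) \<in> H \<and> y = w - scaleC l x" for y using Rg_all[of y] unfolding Rg_def by blast
  have uniq: "x = x'" if "(x, w) \<in> H" "(x', w') \<in> H" "w - scaleC l x = w' - scaleC l x'" for x w x' w'
  proof -
    have "\<bar>Im l\<bar> * norm (x - x') \<le> norm ((w - w') - scaleC l (x - x'))"
      by (rule bound) (rule op_diff[OF op that(1,2)])
    also have "(w - w') - scaleC l (x - x') = 0" using that(3) by (simp add: scaleC_diff_right algebra_simps)
    finally show ?thesis using lpos by (simp add: mult_le_0_iff)
  qed
  define R where "R y = (SOME x. (x, y + scaleC l x) \<in> H)" for y
  have R1: "(R y, y + scaleC l (R y)) \<in> H" for y
  proof -
    obtain x w where "(x, w) \<in> H" "y = w - scaleC l x" using ex by blast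
    then have "(x, y + scaleC l x) \<in> H" by simp
    then show ?thesis unfolding R_def by (rule someI)
  qed
  have R2: "R (w - scaleC l x) = x" if "(x, w) \<in> H" for x w
    by (rule uniq[OF R1 that]) simp
  have Rb: "bounded_clinear R"
  proof (rule bcl_intro[where K="1/\<bar>Im l\<bar>"])
    fix a b
    have "(R a + R b, (a + scaleC l (R a)) + (b + scaleC l (R b))) \<in> H" by (rule op_add[OF op R1 R1])
    then have "R ((a + scaleC l (R a)) + (b + scaleC l (R b)) - scaleC l (R a + R b)) = R a + R b" by (rule R2)
    then show "R (a + b) = R a + R b" by (simp add: scaleC_add_right algebra_simps)
  next
    fix c a
    have "(scaleC c (R a), scaleC c (a + scaleC l (R a))) \<in> H" by (rule op_scale[OF op R1])
    then have "R (scaleC c (a + scaleC l (R a)) - scaleC l (scaleC c (R a))) = scaleC c (R a)" by (rule R2)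
    then show "R (scaleC c a) = scaleC c (R a)" by (simp add: scaleC_add_right scaleC_scaleC mult.commute)
  next
    fix a
    have "\<bar>Im l\<bar> * norm (R a) \<le> norm ((a + scaleC l (R a)) - scaleC l (R a))" by (rule bound[OF R1])
    then show "norm (R a) \<le> norm a * (1 / \<bar>Im l\<bar>)" using lpos by (simp add: field_simps)
  qed
  show ?thesis unfolding op_resolvent_set_def using Rb R1 R2 by blast
qed

lemma resolvent_similar:
  fixes H :: "'a::chilbert lop"
  assumes W: "bounded_clinear W" "bij W" "bounded_clinear (inv W)" and l: "l \<in> op_resolvent_set H"
  shows "l \<in> op_resolvent_set {(x, y). (W x, W y) \<in> H}"
proof -
  obtain R where R: "bounded_clinear R" "\<And>y. (R y, y + scaleC l (R y)) \<in> H"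
    "\<And>x w. (x, w) \<in> H \<Longrightarrow> R (w - scaleC l x) = x"
    using l unfolding op_resolvent_set_def by blast
  have WI: "W (inv W x) = x" for x using W(2) by (simp add: bij_is_surj surj_f_inv_f)
  have IW: "inv W (W x) = x" for x using W(2) by (simp add: bij_is_inj)
  define R' where "R' y = inv W (R (W y))" for y
  have "bounded_clinear R'" unfolding R'_def by (rule bcl_comp[OF W(3) bcl_comp[OF R(1) W(1)]])
  moreover have "(R' y, y + scaleC l (R' y)) \<in> {(x, y). (W x, W y) \<in> H}" for y
    using R(2)[of "W y"] by (simp add: R'_def WI bcl_add[OF W(1)] bcl_scaleC[OF W(1)])
  moreover have "R' (w - scaleC l x) = x" if "(x, w) \<in> {(x, y). (W x, W y) \<in> H}" for x w
    using R(3)[of "W x" "W w"] that by (simp add: R'_def IW bcl_diff[OF W(1)] bcl_scaleC[OF W(1)])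
  ultimately show ?thesis unfolding op_resolvent_set_def by blast
qed

lemma similar_real_spectrum:
  assumes "similar_to_self_adjoint (B::'a::chilbert lop)"
  shows "op_spectrum B \<subseteq> \<real>"
proof
  fix l assume l: "l \<in> op_spectrum B"
  obtain W H where W: "bounded_clinear W" "bij W" "bounded_clinear (inv W)" and H: "self_adjoint_op H"
    and B: "B = {(x, y). (W x, W y) \<in> H}"
    using assms unfolding similar_to_self_adjoint_def by blast
  show "l \<in> \<real>"
  proof (rule ccontr)
    assume "l \<notin> \<real>"
    then have "Im l \<noteq> 0" by (simp add: complex_is_Real_iff)
    then have "l \<in> op_resolvent_set B" unfolding B by (intro resolvent_similar W sa_resolvent H)
    then show False using l unfolding op_spectrum_def by simp
  qed
qed



lemma cinner_sum_right: "cinner a (sum f A) = (\<Sum>i\<in>A. cinner a (f i::'a::chilbert))"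
  by (rule linear_sum[OF bounded_linear.linear[OF bounded_linear_cinner_right]])
lemma cinner_sum_left: "cinner (sum f A) a = (\<Sum>i\<in>A. cinner (f i::'a::chilbert) a)"
  by (rule linear_sum[OF bounded_linear.linear[OF bounded_linear_cinner_left]])


lemma orthogonal_cinner: "cinner a b = 0 \<Longrightarrow> orthogonal a (b::'a::chilbert)"
  unfolding orthogonal_def by (metis Re_cinner zero_complex.sel(1))

locale phil = unitary U for U :: "'a::chilbert \<Rightarrow> 'a" +
  fixes W0 :: "'a set"
  assumes W0sub: "csubspace W0" and W0cl: "closed W0"
    and orth: "\<And>m n x y. m \<noteq> n \<Longrightarrow> x \<in> W0 \<Longrightarrow> y \<in> W0 \<Longrightarrow> cinner (upow U m x) (upow U n y) = 0"
    and complete: "closure (span (\<Union>n. upow U n ` W0)) = UNIV"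
begin

lemma unitary_upow': "unitary (upow U n)"
  by (rule unitary_upow) (rule unitary_axioms)

lemma norm_upow[simp]: "norm (upow U n x) = norm x"
  using unitary.norm_U[OF unitary_upow'] .
lemma cinner_upow: "cinner (upow U n x) (upow U n y) = cinner x y"
  using unitary.cinner_U[OF unitary_upow'] .
lemma bcl_upow: "bounded_clinear (upow U n)"
  using unitary.bcl[OF unitary_upow'] .

definition P0 :: "'a \<Rightarrow> 'a" where
  "P0 x = (SOME p. p \<in> W0 \<and> x - p \<in> ortho_compl W0)"

lemma P0: "P0 x \<in> W0" "x - P0 x \<in> ortho_compl W0"
proof -
  have "\<exists>p. p \<in> W0 \<and> x - p \<in> ortho_compl W0" using proj_exists[OF W0cl W0sub] by blast
  then have "P0 x \<in> W0 \<and> x - P0 x \<in> ortho_compl W0" unfolding P0_def by (rule someI_ex)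
  then show "P0 x \<in> W0" "x - P0 x \<in> ortho_compl W0" by auto
qed

lemma norm_P0: "norm (P0 x) \<le> norm x"
proof -
  have "orthogonal (P0 x) (x - P0 x)"
    by (rule orthogonal_cinner) (rule ortho_compl_orth'[OF P0(2) P0(1)])
  then have "(norm (P0 x + (x - P0 x)))^2 = (norm (P0 x))^2 + (norm (x - P0 x))^2"
    by (rule norm_add_Pythagorean)
  then have "(norm (P0 x))^2 \<le> (norm x)^2" by simp
  then show ?thesis by (meson norm_ge_zero power2_le_imp_le)
qed

lemma upow_W0_orth: "n \<noteq> 0 \<Longrightarrow> w \<in> W0 \<Longrightarrow> upow U n w \<in> ortho_compl W0"
  unfolding ortho_compl_def using orth[of n 0 w] by auto

lemma bessel: "(\<Sum>k<N. (norm (P0 (upow U (int k) x)))^2) \<le> (norm x)^2"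
proof -
  define q where "q k = upow U (- int k) (P0 (upow U (int k) x))" for k
  have nq: "norm (q k) = norm (P0 (upow U (int k) x))" for k unfolding q_def by simp
  have qq: "cinner (q j) (q k) = 0" if "j \<noteq> k" for j k
    unfolding q_def using that by (intro orth P0) auto
  have xq: "cinner (x - q j) (q j) = 0" for j
  proof -
    have "cinner (x - q j) (q j) = cinner (upow U (int j) (x - q j)) (upow U (int j) (q j))"
      by (simp add: cinner_upow)
    also have "upow U (int j) (x - q j) = upow U (int j) x - P0 (upow U (int j) x)"
      by (simp add: bcl_diff[OF bcl_upow] q_def)
    also have "upow U (int j) (q j) = P0 (upow U (int j) x)" by (simp add: q_def)
    finally show ?thesis using ortho_compl_orth[OF P0(2) P0(1)] by simp
  qed
  define s where "s = sum q {..<N}"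
  have xs: "cinner (x - s) (q j) = 0" if "j < N" for j
  proof -
    have "cinner s (q j) = cinner (q j) (q j) + (\<Sum>k\<in>{..<N} - {j}. cinner (q k) (q j))"
      unfolding s_def cinner_sum_left using that by (simp add: sum.remove)
    also have "(\<Sum>k\<in>{..<N} - {j}. cinner (q k) (q j)) = 0" by (intro sum.neutral) (auto intro: qq)
    finally have "cinner s (q j) = cinner (q j) (q j)" by simp
    then show ?thesis using xq[of j] by (simp add: cinner_diff_left)
  qed
  have "cinner (x - s) s = 0"
    unfolding s_def[of] cinner_sum_right using xs by (simp add: s_def)
  then have "orthogonal (x - s) s" by (rule orthogonal_cinner)
  then have "(norm ((x - s) + s))^2 = (norm (x - s))^2 + (norm s)^2" by (rule norm_add_Pythagorean)
  then have "(norm s)^2 \<le> (norm x)^2" by simp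
  moreover have "(norm s)^2 = (\<Sum>k<N. (norm (q k))^2)"
    unfolding s_def by (rule norm_sum_Pythagorean) (auto simp: pairwise_def intro: orthogonal_cinner qq)
  ultimately show ?thesis by (simp add: nq)
qed

end



instance chilbert \<subseteq> banach ..

context phil begin

definition goodD :: "('a \<Rightarrow> 'a) \<Rightarrow> bool" where
  "goodD D \<longleftrightarrow> bounded_clinear D \<and> (\<forall>v\<in>ortho_compl W0. D v = 0) \<and> (\<forall>y. D y \<in> W0)"

definition trm :: "('a \<Rightarrow> 'a) \<Rightarrow> nat \<Rightarrow> 'a \<Rightarrow> 'a" where
  "trm D n x = upow U (- int n) (D (upow U (int n) x))"

definition Zop :: "('a \<Rightarrow> 'a) \<Rightarrow> 'a \<Rightarrow> 'a" where
  "Zop D x = x + (\<Sum>n. trm D n x)"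

lemma goodD_P0: "goodD D \<Longrightarrow> D y = D (P0 y)"
proof -
  assume g: "goodD D"
  have "D y = D (P0 y + (y - P0 y))" by simp
  also have "\<dots> = D (P0 y) + D (y - P0 y)" using g bcl_add unfolding goodD_def by blast
  also have "D (y - P0 y) = 0" using g P0(2) unfolding goodD_def by blast
  finally show ?thesis by simp
qed

lemma goodD_bound: "goodD D \<Longrightarrow> \<exists>K>0. \<forall>y. norm (D y) \<le> K * norm (P0 y)"
proof -
  assume g: "goodD D"
  then obtain K where K: "K > 0" "\<And>z. norm (D z) \<le> norm z * K" using bcl_bound unfolding goodD_def by blast
  have "norm (D y) \<le> K * norm (P0 y)" for y using K(2)[of "P0 y"] goodD_P0[OF g, of y] by (simp add: mult.commute)
  then show ?thesis using K(1) by blast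
qed

lemma bcl_trm: "goodD D \<Longrightarrow> bounded_clinear (trm D n)"
  unfolding trm_def goodD_def
  by (intro bcl_comp[OF bcl_upow] bcl_comp[OF _ bcl_upow]) auto

lemma trm_W0: "goodD D \<Longrightarrow> trm D n x \<in> upow U (- int n) ` W0"
  unfolding trm_def goodD_def by auto

lemma trm_orth: "goodD D \<Longrightarrow> goodD D' \<Longrightarrow> j \<noteq> k \<Longrightarrow> cinner (trm D j x) (trm D' k x') = 0"
  unfolding trm_def goodD_def by (intro orth) auto

lemma trm_norm: "norm (trm D n x) = norm (D (upow U (int n) x))"
  unfolding trm_def by simp

lemma trm_summable:
  assumes g: "goodD D"
  shows "summable (\<lambda>n. trm D n x)" and "\<exists>K>0. \<forall>x. norm (\<Sum>n. trm D n x) \<le> K * norm x"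
proof -
  obtain K where K: "K > 0" "\<And>y. norm (D y) \<le> K * norm (P0 y)" using goodD_bound[OF g] by blast
  define a where "a x n = (norm (P0 (upow U (int n) x)))^2" for x n
  have a_nonneg: "0 \<le> a x n" for x n unfolding a_def by simp
  have a_sum: "sum (a x) {..<N} \<le> (norm x)^2" for x N unfolding a_def by (rule bessel)
  have a_summ: "summable (a x)" for x by (rule summableI_nonneg_bounded[OF a_nonneg a_sum])
  have psum: "(norm (sum (\<lambda>k. trm D k x) A))^2 \<le> K^2 * sum (a x) A" if "finite A" for A x
  proof -
    have "(norm (sum (\<lambda>k. trm D k x) A))^2 = (\<Sum>k\<in>A. (norm (trm D k x))^2)"
      using that by (intro norm_sum_Pythagorean) (auto simp: pairwise_def intro: orthogonal_cinner trm_orth[OF g g])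
    also have "\<dots> \<le> (\<Sum>k\<in>A. K^2 * a x k)"
    proof (rule sum_mono)
      fix k
      have "norm (trm D k x) \<le> K * norm (P0 (upow U (int k) x))" unfolding trm_norm by (rule K(2))
      then have "(norm (trm D k x))^2 \<le> (K * norm (P0 (upow U (int k) x)))^2" by (intro power_mono) auto
      then show "(norm (trm D k x))^2 \<le> K^2 * a x k" unfolding a_def by (simp add: power_mult_distrib)
    qed
    finally show ?thesis by (simp add: sum_distrib_left)
  qed
  show summ: "summable (\<lambda>n. trm D n x)" for x
  proof (rule summable_Cauchy[THEN iffD2], intro allI impI)
    fix e :: real assume e: "0 < e"
    have "0 < e^2 / (K^2 + 1)" using e by (intro divide_pos_pos) (auto simp: add_nonneg_pos)
    then obtain N where N: "\<forall>m\<ge>N. \<forall>n. norm (sum (a x) {m..<n}) < e^2 / (K^2 + 1)"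
      using a_summ[of x] unfolding summable_Cauchy by blast
    show "\<exists>N. \<forall>m\<ge>N. \<forall>n. norm (\<Sum>k = m..<n. trm D k x) < e"
    proof (intro exI allI impI)
      fix m n assume "N \<le> m"
      then have lt: "sum (a x) {m..<n} < e^2 / (K^2 + 1)" using N by (auto simp: abs_less_iff)
      have "(norm (\<Sum>k = m..<n. trm D k x))^2 \<le> K^2 * sum (a x) {m..<n}" by (rule psum) simp
      also have "\<dots> \<le> K^2 * (e^2 / (K^2 + 1))" using lt by (intro mult_left_mono) auto
      also have "\<dots> < e^2"
      proof -
        have p: "0 < K^2 + 1" by (simp add: add_nonneg_pos)
        have "K^2 * e^2 < (K^2 + 1) * e^2" using e by simp
        then show ?thesis using p by (simp add: field_simps)
      qed
      finally show "norm (\<Sum>k = m..<n. trm D k x) < e" using e by (simp add: power_less_imp_less_base)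
    qed
  qed
  have "norm (\<Sum>n. trm D n x) \<le> K * norm x" for x
  proof -
    have "(\<lambda>N. norm (\<Sum>k<N. trm D k x)) \<longlonglongrightarrow> norm (\<Sum>n. trm D n x)"
      by (intro tendsto_norm summable_LIMSEQ summ)
    moreover have "norm (\<Sum>k<N. trm D k x) \<le> K * norm x" for N
    proof -
      have "(norm (\<Sum>k<N. trm D k x))^2 \<le> K^2 * sum (a x) {..<N}" by (rule psum) simp
      also have "\<dots> \<le> K^2 * (norm x)^2" by (intro mult_left_mono a_sum) auto
      also have "\<dots> = (K * norm x)^2" by (simp add: power_mult_distrib)
      finally show ?thesis using K(1) by (meson norm_ge_zero power2_le_imp_le mult_nonneg_nonneg less_imp_le)
    qed
    ultimately show ?thesis by (intro LIMSEQ_le_const2) auto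
  qed
  then show "\<exists>K>0. \<forall>x. norm (\<Sum>n. trm D n x) \<le> K * norm x" using K(1) by blast
qed

lemma Zop_bcl:
  assumes g: "goodD D"
  shows "bounded_clinear (Zop D)"
proof -
  obtain K where K: "K > 0" "\<And>x. norm (\<Sum>n. trm D n x) \<le> K * norm x" using trm_summable(2)[OF g] by blast
  note summ = trm_summable(1)[OF g]
  show ?thesis
  proof (rule bcl_intro[where K="1 + K"])
    fix x y
    have "(\<Sum>n. trm D n (x + y)) = (\<Sum>n. trm D n x + trm D n y)"
      by (simp add: bcl_add[OF bcl_trm[OF g]])
    also have "\<dots> = (\<Sum>n. trm D n x) + (\<Sum>n. trm D n y)" by (rule suminf_add[OF summ summ, symmetric])
    finally show "Zop D (x + y) = Zop D x + Zop D y" unfolding Zop_def by (simp add: algebra_simps)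
  next
    fix c x
    have "(\<Sum>n. trm D n (scaleC c x)) = (\<Sum>n. scaleC c (trm D n x))"
      by (simp add: bcl_scaleC[OF bcl_trm[OF g]])
    also have "\<dots> = scaleC c (\<Sum>n. trm D n x)"
      by (rule bounded_linear.suminf[OF bounded_linear_scaleC summ, symmetric])
    finally show "Zop D (scaleC c x) = scaleC c (Zop D x)" unfolding Zop_def by (simp add: scaleC_add_right)
  next
    fix x
    have "norm (Zop D x) \<le> norm x + norm (\<Sum>n. trm D n x)" unfolding Zop_def by (rule norm_triangle_ineq)
    also have "\<dots> \<le> norm x + K * norm x" using K(2) by simp
    finally show "norm (Zop D x) \<le> norm x * (1 + K)" by (simp add: algebra_simps)
  qed
qed

lemma trm_on_W0: "goodD D \<Longrightarrow> w \<in> W0 \<Longrightarrow> n \<noteq> 0 \<Longrightarrow> trm D n w = 0"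
  unfolding trm_def goodD_def using upow_W0_orth[of "int n" w]
  by (simp add: bcl_zero[OF bcl_upow])

lemma trm_cross: "goodD D \<Longrightarrow> goodD D' \<Longrightarrow> m \<noteq> n \<Longrightarrow> trm D n (trm D' m x) = 0"
proof -
  assume g: "goodD D" "goodD D'" "m \<noteq> n"
  have "upow U (int n) (trm D' m x) = upow U (int n - int m) (D' (upow U (int m) x))"
    unfolding trm_def by (simp add: upow_add)
  moreover have "int n - int m \<noteq> 0" using g(3) by simp
  ultimately have "upow U (int n) (trm D' m x) \<in> ortho_compl W0"
    using upow_W0_orth g(2) unfolding goodD_def by simp
  then show ?thesis using g(1) unfolding trm_def goodD_def by (simp add: bcl_zero[OF bcl_upow])
qed

lemma Zop_on_D: "goodD D \<Longrightarrow> Zop D (D x) = D x + D (D x)"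
proof -
  assume g: "goodD D"
  have "(\<Sum>n. trm D n (D x)) = (\<Sum>n\<in>{0}. trm D n (D x))"
    by (rule suminf_finite) (use g trm_on_W0 goodD_def in auto)
  then show ?thesis unfolding Zop_def by (simp add: trm_def)
qed

lemma Zop_comm:
  assumes g: "goodD D"
  shows "Zop D (U (x + D x)) = U (Zop D x)"
proof -
  define y where "y = x + D x"
  note summ = trm_summable(1)[OF g]
  have t: "trm D n (U y) = U (trm D (Suc n) y)" for n
  proof -
    have "upow U (int n) (U y) = upow U (int (Suc n)) y"
      using upow_add[of "int n" 1 y] by (simp add: algebra_simps)
    moreover have "U (upow U (- int (Suc n)) z) = upow U (- int n) z" for z
      using upow_add[of 1 "- int (Suc n)" z] by simp
    ultimately show ?thesis unfolding trm_def by simp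
  qed
  have "(\<Sum>n. trm D n (U y)) = (\<Sum>n. U (trm D (Suc n) y))" by (simp add: t)
  also have "\<dots> = U (\<Sum>n. trm D (Suc n) y)"
    by (rule bounded_linear.suminf[OF bcl_linear[OF bcl], symmetric]) (rule summable_Suc_iff[THEN iffD2, OF summ])
  also have "(\<Sum>n. trm D (Suc n) y) = (\<Sum>n. trm D n y) - D y"
    using suminf_split_head[OF summ[of y]] by (simp add: trm_def)
  finally have "Zop D (U y) = U (y + ((\<Sum>n. trm D n y) - D y))"
    unfolding Zop_def by (simp add: bcl_add[OF bcl] bcl_diff[OF bcl])
  also have "y + ((\<Sum>n. trm D n y) - D y) = Zop D y - D y" unfolding Zop_def by simp
  also have "Zop D y = Zop D x + Zop D (D x)" unfolding y_def by (rule bcl_add[OF Zop_bcl[OF g]])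
  also have "D y = D x + D (D x)" unfolding y_def using g bcl_add unfolding goodD_def by blast
  finally show ?thesis using Zop_on_D[OF g, of x] unfolding y_def by simp
qed

lemma Zop_inverse:
  assumes g: "goodD D" "goodD D'" and rel: "\<And>x. D x + D' x + D (D' x) = 0"
  shows "Zop D (Zop D' x) = x"
proof -
  note sD = trm_summable(1)[OF g(1)] and sD' = trm_summable(1)[OF g(2)]
  define C where "C n = upow U (- int n) (D (D' (upow U (int n) x)))" for n
  have ABC: "trm D n x + trm D' n x + C n = 0" for n
  proof -
    have "trm D n x + trm D' n x + C n = upow U (- int n) (D (upow U (int n) x) + D' (upow U (int n) x) + D (D' (upow U (int n) x)))"
      unfolding trm_def C_def by (simp add: bcl_add[OF bcl_upow])
    also have "\<dots> = 0" by (simp add: rel bcl_zero[OF bcl_upow])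
    finally show ?thesis .
  qed
  have Ceq: "C n = - (trm D n x + trm D' n x)" for n using ABC[of n] by (metis add_eq_0_iff)
  have sC: "summable C" unfolding Ceq by (intro summable_minus summable_add sD sD')
  have inner: "trm D n (Zop D' x) = trm D n x + C n" for n
  proof -
    have "trm D n (Zop D' x) = trm D n x + trm D n (\<Sum>m. trm D' m x)"
      unfolding Zop_def by (rule bcl_add[OF bcl_trm[OF g(1)]])
    also have "trm D n (\<Sum>m. trm D' m x) = (\<Sum>m. trm D n (trm D' m x))"
      by (rule bounded_linear.suminf[OF bcl_linear[OF bcl_trm[OF g(1)]] sD'])
    also have "\<dots> = (\<Sum>m\<in>{n}. trm D n (trm D' m x))"
      by (rule suminf_finite) (use trm_cross[OF g] in auto)
    also have "\<dots> = C n" unfolding C_def trm_def by (simp add: upow_add)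
    finally show ?thesis .
  qed
  have "Zop D (Zop D' x) = Zop D' x + (\<Sum>n. trm D n (Zop D' x))" by (rule Zop_def)
  also have "\<dots> = (x + (\<Sum>n. trm D' n x)) + ((\<Sum>n. trm D n x) + (\<Sum>n. C n))"
    unfolding inner by (simp only: Zop_def[of D' x] suminf_add[OF sD sC, symmetric])
  also have "\<dots> = x + (\<Sum>n. trm D' n x + (trm D n x + C n))"
    using suminf_add[OF sD' summable_add[OF sD sC]] suminf_add[OF sD sC] by (simp add: add.assoc)
  also have "(\<Sum>n. trm D' n x + (trm D n x + C n)) = 0" using ABC by (simp add: algebra_simps)
  finally show ?thesis by (simp add: algebra_simps)
qed

end



lemma closed_ortho_compl: "closed (ortho_compl (M::'a::chilbert set))"
proof -
  have "ortho_compl M = (\<Inter>m\<in>M. {y. cinner y m = 0})" unfolding ortho_compl_def by auto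
  moreover have "closed {y. cinner y m = 0}" for m :: 'a
    by (rule closed_Collect_eq) (auto intro: linear_continuous_on bounded_linear_cinner_left)
  ultimately show ?thesis by auto
qed

context phil begin

lemma upow_fixed: "U x = x \<Longrightarrow> upow U n x = x"
proof (induction n rule: int_induct[where k=0])
  case base then show ?case by simp
next
  case (step1 i) then show ?case by (simp add: upow_Suc)
next
  case (step2 i) then show ?case by (simp add: upow_pred) (metis inv_U)
qed

lemma no_fixed: assumes fx: "U x = x" shows "x = 0"
proof -
  have b: "real N * (norm (P0 x))^2 \<le> (norm x)^2" for N
    using bessel[of x N] by (simp add: upow_fixed[OF fx])
  have P0x: "P0 x = 0"
  proof (rule ccontr)
    assume "P0 x \<noteq> 0"
    then have pos: "0 < (norm (P0 x))^2" by simp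
    obtain N :: nat where N: "(norm x)^2 / (norm (P0 x))^2 < N" using reals_Archimedean2 by blast
    then have "(norm x)^2 < N * (norm (P0 x))^2" using pos by (simp add: field_simps)
    with b[of N] show False by simp
  qed
  then have xo: "x \<in> ortho_compl W0" using P0(2)[of x] by simp
  have sub: "(\<Union>n. upow U n ` W0) \<subseteq> ortho_compl {x}"
  proof
    fix y assume "y \<in> (\<Union>n. upow U n ` W0)"
    then obtain n w where w: "w \<in> W0" "y = upow U n w" by blast
    have "cinner x y = cinner (upow U n x) (upow U n w)" using w by (simp add: upow_fixed[OF fx])
    also have "\<dots> = 0" using cinner_upow ortho_compl_orth[OF xo w(1)] by simp
    finally have "cinner x y = 0" .
    moreover have "cinner y x = cnj (cinner x y)" by (rule cinner_commute)
    ultimately show "y \<in> ortho_compl {x}" unfolding ortho_compl_def by simp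
  qed
  have "span (\<Union>n. upow U n ` W0) \<subseteq> ortho_compl {x}"
    by (rule span_minimal[OF sub csubspace_subspace[OF ortho_compl_csubspace]])
  then have "closure (span (\<Union>n. upow U n ` W0)) \<subseteq> ortho_compl {x}"
    by (rule closure_minimal[OF _ closed_ortho_compl])
  then have "x \<in> ortho_compl {x}" using complete by auto
  then show "x = 0" unfolding ortho_compl_def by simp
qed

definition HU :: "'a lop" where
  "HU = {(U u - u, II (U u + u)) | u. True}"

lemma HU_op: "is_op HU"
  unfolding is_op_def HU_def
proof (intro conjI allI impI ballI)
  show "(0, 0) \<in> {(U u - u, II (U u + u)) |u. True}"
    by (rule CollectI, rule exI[of _ 0]) (simp add: bcl_zero[OF bcl])
next
  fix p q assume "p \<in> {(U u - u, II (U u + u)) |u. True}" "q \<in> {(U u - u, II (U u + u)) |u. True}"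
  then obtain u v where "p = (U u - u, II (U u + u))" "q = (U v - v, II (U v + v))" by blast
  then show "p + q \<in> {(U u - u, II (U u + u)) |u. True}"
    by (intro CollectI exI[of _ "u + v"]) (simp add: bcl_add[OF bcl] scaleC_add_right algebra_simps)
next
  fix c x y assume "(x, y) \<in> {(U u - u, II (U u + u)) |u. True}"
  then obtain u where "x = U u - u" "y = II (U u + u)" by blast
  then show "(scaleC c x, scaleC c y) \<in> {(U u - u, II (U u + u)) |u. True}"
    by (intro CollectI exI[of _ "scaleC c u"])
      (simp add: bcl_scaleC[OF bcl] scaleC_add_right scaleC_diff_right scaleC_scaleC mult.commute)
next
  fix y assume "(0, y) \<in> {(U u - u, II (U u + u)) |u. True}"
  then obtain u where "0 = U u - u" "y = II (U u + u)" by blast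
  then have "U u = u" by simp
  then have "u = 0" by (rule no_fixed)
  then show "y = 0" using \<open>y = II (U u + u)\<close> by (simp add: bcl_zero[OF bcl])
qed

lemma HU_dense: "closure (Domain HU) = UNIV"
proof -
  have dom: "Domain HU = range (\<lambda>u. U u - u)" unfolding HU_def by auto
  have sub: "csubspace (range (\<lambda>u. U u - u))"
    unfolding csubspace_def
  proof (intro conjI ballI allI)
    show "0 \<in> range (\<lambda>u. U u - u)" by (rule range_eqI[of _ _ 0]) (simp add: bcl_zero[OF bcl])
  next
    fix a b assume "a \<in> range (\<lambda>u. U u - u)" "b \<in> range (\<lambda>u. U u - u)"
    then obtain u v where "a = U u - u" "b = U v - v" by blast
    then show "a + b \<in> range (\<lambda>u. U u - u)"
      by (intro range_eqI[of _ _ "u + v"]) (simp add: bcl_add[OF bcl] algebra_simps)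
  next
    fix c a assume "a \<in> range (\<lambda>u. U u - u)"
    then obtain u where "a = U u - u" by blast
    then show "scaleC c a \<in> range (\<lambda>u. U u - u)"
      by (intro range_eqI[of _ _ "scaleC c u"]) (simp add: bcl_scaleC[OF bcl] scaleC_diff_right)
  qed
  have "closure (range (\<lambda>u. U u - u)) = UNIV"
  proof (rule dense_criterion[OF sub])
    fix y assume o: "\<And>m. m \<in> range (\<lambda>u. U u - u) \<Longrightarrow> cinner m y = 0"
    have "cinner u (inv U y) = cinner u y" for u
    proof -
      have "cinner (U u - u) y = 0" using o by blast
      then show ?thesis by (simp add: cinner_diff_left cinner_invU')
    qed
    then have "inv U y = y" by (rule cinner_ext_right)
    then have "U y = y" by (metis U_inv)
    then show "y = 0" by (rule no_fixed)
  qed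
  then show ?thesis using dom by simp
qed

lemma HU_adj: "op_adj HU = HU"
proof
  show "HU \<subseteq> op_adj HU"
  proof
    fix p assume "p \<in> HU"
    then obtain u where p: "p = (U u - u, II (U u + u))" unfolding HU_def by blast
    show "p \<in> op_adj HU"
      unfolding op_adj_def p
    proof (clarsimp)
      fix x w assume "(x, w) \<in> HU"
      then obtain v where xv: "x = U v - v" "w = II (U v + v)" unfolding HU_def by blast
      have "cinner (II (U v + v)) (U u - u) = cinner (U v - v) (II (U u + u))"
        by (simp add: cinner_diff_left cinner_diff_right cinner_add_left cinner_add_right
            cinner_scaleC_left cinner_scaleC_right cinner_U algebra_simps)
      then show "cinner w (U u - u) = cinner x (II (U u + u))" unfolding xv .
    qed
  qed
next
  show "op_adj HU \<subseteq> HU"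
  proof
    fix p assume pa: "p \<in> op_adj HU"
    obtain y z where p: "p = (y, z)" by (cases p)
    have rel: "cinner (II (U u + u)) y = cinner (U u - u) z" for u
      using pa unfolding p op_adj_def HU_def by blast
    define a where "a = - (z + II y)"
    define b where "b = II y - z"
    have "cinner (U u) a = cinner u b" for u
      using rel[of u] unfolding a_def b_def
      by (simp add: cinner_diff_left cinner_diff_right cinner_add_left cinner_add_right cinner_minus_right
            cinner_scaleC_left cinner_scaleC_right algebra_simps)
    then have "cinner u (inv U a) = cinner u b" for u by (simp add: cinner_invU')
    then have "inv U a = b" by (rule cinner_ext_right)
    then have Ub: "U b = a" by (metis U_inv)
    define u where "u = scaleC (\<i>/2) b"
    have Uu: "U u = scaleC (\<i>/2) a" unfolding u_def by (simp add: bcl_scaleC[OF bcl] Ub)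
    have s2: "x + x = scaleC 2 x" for x :: 'a using scaleC_of_real[of 2 x] by (simp add: scaleR_2)
    have amb: "a - b = scaleC (- (2*\<i>)) y"
    proof -
      have "a - b = - (II y + II y)" unfolding a_def b_def by (simp add: algebra_simps)
      also have "\<dots> = scaleC (- (2*\<i>)) y" by (simp add: s2 scaleC_scaleC scaleC_minus_left)
      finally show ?thesis .
    qed
    have apb: "a + b = scaleC (- 2) z"
    proof -
      have "a + b = - (z + z)" unfolding a_def b_def by (simp add: algebra_simps)
      also have "\<dots> = scaleC (- 2) z" by (simp add: s2 scaleC_minus_left)
      finally show ?thesis .
    qed
    have "U u - u = scaleC (\<i>/2) (a - b)" using Uu by (simp add: u_def scaleC_diff_right)
    also have "\<dots> = y" by (simp add: amb scaleC_scaleC scaleC_one)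
    finally have 1: "U u - u = y" .
    have "II (U u + u) = II (scaleC (\<i>/2) (a + b))" using Uu by (simp add: u_def scaleC_add_right)
    also have "\<dots> = z" by (simp add: apb scaleC_scaleC scaleC_one)
    finally have 2: "II (U u + u) = z" .
    show "p \<in> HU" unfolding p HU_def using 1 2 by blast
  qed
qed

lemma HU_sa: "self_adjoint_op HU"
  unfolding self_adjoint_op_def dense_op_def using HU_op HU_dense HU_adj by blast

end



lemma sc2: "scaleC (2 * c) x = scaleC c x + scaleC c (x::'a::chilbert)"
  using scaleC_add_left[of c c x] by (simp only: mult_2)

lemma fs_cinner: "fundamental_symmetry J \<Longrightarrow> cinner (J a) (J b) = cinner a b"
  unfolding fundamental_symmetry_def by simp

context phil begin

abbreviation "S \<equiv> phillips_op U W0"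

lemma S_mem: "v \<in> ortho_compl W0 \<Longrightarrow> (U v - v, II (U v + v)) \<in> S"
  unfolding phillips_op_def by blast

lemma B_sub_adjS:
  assumes J: "fundamental_symmetry J" and comm: "commutes_with J S" and SB: "S \<subseteq> B"
    and Jsa: "J_self_adjoint J B"
  shows "B \<subseteq> op_adj S"
proof
  fix p assume pB: "p \<in> B"
  obtain x w where p: "p = (x, w)" by (cases p)
  have "(x, J w) \<in> op_comp_left J B" unfolding op_comp_left_def using pB p by blast
  then have "(x, J w) \<in> op_comp_right (op_adj B) J" using Jsa unfolding J_self_adjoint_def by simp
  then have adjB: "(J x, J w) \<in> op_adj B" unfolding op_comp_right_def by simp
  show "p \<in> op_adj S"
    unfolding p op_adj_def
  proof (clarsimp)
    fix u v assume uv: "(u, v) \<in> S"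
    then have "(J u, J v) \<in> S" using comm unfolding commutes_with_def by blast
    then have "(J u, J v) \<in> B" using SB by blast
    then have "cinner (J v) (J x) = cinner (J u) (J w)" using adjB unfolding op_adj_def by blast
    then show "cinner v x = cinner u w" using fs_cinner[OF J] by simp
  qed
qed

lemma direction2:
  assumes J: "fundamental_symmetry J" and comm: "commutes_with J S" and SB: "S \<subseteq> B"
    and Jsa: "J_self_adjoint J B" and spec: "op_spectrum B \<subseteq> \<real>"
  shows "similar_to_self_adjoint B"
proof -
  have Bop: "is_op B" using Jsa unfolding J_self_adjoint_def dense_op_def by blast
  have BS: "B \<subseteq> op_adj S" by (rule B_sub_adjS[OF J comm SB Jsa])
  have "\<i> \<in> op_resolvent_set B" using spec unfolding op_spectrum_def by (auto simp: complex_is_Real_iff)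
  then obtain Rp where Rp: "bounded_clinear Rp" "\<And>y. (Rp y, y + scaleC \<i> (Rp y)) \<in> B"
    "\<And>x w. (x, w) \<in> B \<Longrightarrow> Rp (w - scaleC \<i> x) = x"
    unfolding op_resolvent_set_def by blast
  have "- \<i> \<in> op_resolvent_set B" using spec unfolding op_spectrum_def by (auto simp: complex_is_Real_iff)
  then obtain Rm where Rm: "bounded_clinear Rm" "\<And>y. (Rm y, y + scaleC (- \<i>) (Rm y)) \<in> B"
    "\<And>x w. (x, w) \<in> B \<Longrightarrow> Rm (w - scaleC (- \<i>) x) = x"
    unfolding op_resolvent_set_def by blast
  define T where "T y = y + scaleC (2*\<i>) (Rp y)" for y
  define T' where "T' y = y - scaleC (2*\<i>) (Rm y)" for y
  have Tb: "bounded_clinear T" unfolding T_def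
    by (rule bcl_add_op[OF bcl_id bcl_comp[OF bcl_scaleC_op Rp(1)]])
  have T'b: "bounded_clinear T'" unfolding T'_def
    by (rule bcl_diff_op[OF bcl_id bcl_comp[OF bcl_scaleC_op Rm(1)]])
  have TT': "T (T' y) = y" for y
  proof -
    let ?x = "Rm y"
    have "Rp ((y + scaleC (- \<i>) ?x) - scaleC \<i> ?x) = ?x" by (rule Rp(3)[OF Rm(2)])
    moreover have "(y + scaleC (- \<i>) ?x) - scaleC \<i> ?x = T' y"
      unfolding T'_def by (simp add: sc2 scaleC_minus_left)
    ultimately have "Rp (T' y) = ?x" by simp
    then show ?thesis unfolding T_def by (simp add: T'_def)
  qed
  have T'T: "T' (T y) = y" for y
  proof -
    let ?x = "Rp y"
    have "Rm ((y + scaleC \<i> ?x) - scaleC (- \<i>) ?x) = ?x" by (rule Rm(3)[OF Rp(2)])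
    moreover have "(y + scaleC \<i> ?x) - scaleC (- \<i>) ?x = T y"
      unfolding T_def by (simp add: sc2 scaleC_minus_left)
    ultimately have "Rm (T y) = ?x" by simp
    then show ?thesis unfolding T'_def by (simp add: T_def)
  qed
  have TU: "T v = U v" if v: "v \<in> ortho_compl W0" for v
  proof -
    have "(U v - v, II (U v + v)) \<in> B" using S_mem[OF v] SB by blast
    from Rp(3)[OF this] have "Rp (II (U v + v) - II (U v - v)) = U v - v" .
    moreover have "II (U v + v) - II (U v - v) = scaleC (2*\<i>) v"
      by (simp add: sc2 scaleC_add_right scaleC_diff_right)
    ultimately have "scaleC (2*\<i>) (Rp v) = U v - v" by (simp add: bcl_scaleC[OF Rp(1)])
    then show ?thesis unfolding T_def by simp
  qed
  have TW0: "inv U (T w) \<in> W0" if w: "w \<in> W0" for w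
  proof (rule double_ortho[OF W0cl W0sub])
    fix v assume v: "v \<in> ortho_compl W0"
    let ?x = "Rp w"
    have "(?x, w + scaleC \<i> ?x) \<in> op_adj S" using Rp(2) BS by blast
    then have E: "cinner (II (U v + v)) ?x = cinner (U v - v) (w + II ?x)"
      using S_mem[OF v] unfolding op_adj_def by blast
    have d0: "cinner v w = 0" by (rule ortho_compl_orth[OF v w])
    have "cinner (U v) (T w) = 0"
      using E d0 unfolding T_def
      by (simp add: cinner_add_left cinner_add_right cinner_diff_left cinner_diff_right
          cinner_scaleC_left cinner_scaleC_right algebra_simps)
    then have "cinner (T w) (U v) = 0" using cinner_commute[of "T w" "U v"] by simp
    then show "cinner (inv U (T w)) v = 0" by (simp add: cinner_invU)
  qed
  have T'W0: "T' (U w) \<in> W0" if w: "w \<in> W0" for w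
  proof -
    let ?h = "T' (U w)"
    have Th: "T ?h = U w" by (rule TT')
    let ?r = "?h - P0 ?h"
    have ro: "?r \<in> ortho_compl W0" by (rule P0(2))
    have "T ?h = T (P0 ?h) + T ?r" using bcl_add[OF Tb, of "P0 ?h" ?r] by simp
    also have "T ?r = U ?r" by (rule TU[OF ro])
    finally have Ur: "U ?r = U w - T (P0 ?h)" using Th by (simp add: algebra_simps)
    have "?r = inv U (U ?r)" by simp
    also have "\<dots> = w - inv U (T (P0 ?h))" unfolding Ur by (simp add: bcl_diff[OF bcl_inv_U])
    also have "\<dots> \<in> W0" by (intro csubspaceD(5)[OF W0sub] w TW0 P0(1))
    finally have "?r \<in> W0" .
    then have "cinner ?r ?r = 0" using ortho_compl_orth[OF ro] by blast
    then have "?r = 0" by simp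
    then show ?thesis using P0(1)[of ?h] by simp
  qed
  define D where "D x = inv U (T x) - x" for x
  define D' where "D' x = T' (U x) - x" for x
  have Dadd: "D (a + b) = D a + D b" for a b
    unfolding D_def by (simp add: bcl_add[OF Tb] bcl_add[OF bcl_inv_U])
  have D'add: "D' (a + b) = D' a + D' b" for a b
    unfolding D'_def by (simp add: bcl_add[OF T'b] bcl_add[OF bcl])
  have gD: "goodD D" unfolding goodD_def
  proof (intro conjI allI ballI)
    show "bounded_clinear D" unfolding D_def by (rule bcl_diff_op[OF bcl_comp[OF bcl_inv_U Tb] bcl_id])
  next
    fix v assume "v \<in> ortho_compl W0" then show "D v = 0" unfolding D_def by (simp add: TU)
  next
    fix y
    have "D y = D (P0 y + (y - P0 y))" by simp
    also have "\<dots> = D (P0 y) + D (y - P0 y)" by (rule Dadd)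
    also have "D (y - P0 y) = 0" unfolding D_def using TU[OF P0(2)] by simp
    finally show "D y \<in> W0" using csubspaceD(5)[OF W0sub TW0[OF P0(1)] P0(1)] by (simp add: D_def)
  qed
  have gD': "goodD D'" unfolding goodD_def
  proof (intro conjI allI ballI)
    show "bounded_clinear D'" unfolding D'_def by (rule bcl_diff_op[OF bcl_comp[OF T'b bcl] bcl_id])
  next
    fix v assume "v \<in> ortho_compl W0" then show "D' v = 0" unfolding D'_def using TU[of v] T'T[of v] by simp
  next
    fix y
    have "D' y = D' (P0 y + (y - P0 y))" by simp
    also have "\<dots> = D' (P0 y) + D' (y - P0 y)" by (rule D'add)
    also have "D' (y - P0 y) = 0" unfolding D'_def using TU[OF P0(2), of y] T'T[of "y - P0 y"] by simp
    finally show "D' y \<in> W0" using csubspaceD(5)[OF W0sub T'W0[OF P0(1)] P0(1)] by (simp add: D'_def)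
  qed
  have rel1: "D x + D' x + D (D' x) = 0" for x
  proof -
    have "x + D' x = T' (U x)" unfolding D'_def by simp
    then have "x + D' x + D (x + D' x) = x" unfolding D_def by (simp add: TT')
    then show ?thesis by (simp add: Dadd algebra_simps)
  qed
  have rel2: "D' x + D x + D' (D x) = 0" for x
  proof -
    have "x + D x = inv U (T x)" unfolding D_def by simp
    then have "x + D x + D' (x + D x) = x" unfolding D'_def by (simp add: T'T)
    then show ?thesis by (simp add: D'add algebra_simps)
  qed
  define Z where "Z = Zop D"
  define Z' where "Z' = Zop D'"
  have ZZ': "Z (Z' x) = x" for x unfolding Z_def Z'_def by (rule Zop_inverse[OF gD gD' rel1])
  have Z'Z: "Z' (Z x) = x" for x unfolding Z_def Z'_def by (rule Zop_inverse[OF gD' gD rel2])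
  have Zb: "bounded_clinear Z" unfolding Z_def by (rule Zop_bcl[OF gD])
  have Z'b: "bounded_clinear Z'" unfolding Z'_def by (rule Zop_bcl[OF gD'])
  have Zinj: "a = b" if "Z a = Z b" for a b
  proof -
    have "a = Z' (Z a)" by (rule Z'Z[symmetric])
    also have "\<dots> = Z' (Z b)" using that by (rule arg_cong)
    also have "\<dots> = b" by (rule Z'Z)
    finally show ?thesis .
  qed
  have "inj Z" by (rule injI) (rule Zinj)
  moreover have "surj Z" by (rule surjI[of _ Z']) (rule ZZ')
  ultimately have Zbij: "bij Z" by (rule bijI)
  have invZ: "inv Z = Z'" by (rule inv_equality[OF Z'Z ZZ'])
  have ZT: "Z (T x) = U (Z x)" for x
  proof -
    have "T x = U (x + D x)" unfolding D_def by simp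
    then show ?thesis unfolding Z_def by (simp add: Zop_comm[OF gD])
  qed
  have Bchar: "B = {(T v - v, II (T v + v)) | v. True}"
  proof
    show "B \<subseteq> {(T v - v, II (T v + v)) | v. True}"
    proof
      fix p assume pB: "p \<in> B"
      obtain x z where p: "p = (x, z)" by (cases p)
      let ?y = "z - scaleC \<i> x"
      have Rpy: "Rp ?y = x" using Rp(3) pB p by blast
      define v where "v = scaleC (- \<i> / 2) ?y"
      have 2: "scaleC (2*\<i>) v = ?y" unfolding v_def by (simp add: scaleC_scaleC scaleC_one)
      have "T v - v = scaleC (2*\<i>) (Rp v)" unfolding T_def by simp
      also have "\<dots> = Rp (scaleC (2*\<i>) v)" by (rule bcl_scaleC[OF Rp(1), symmetric])
      also have "\<dots> = x" unfolding 2 by (rule Rpy)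
      finally have 1: "T v - v = x" .
      have "T v = x + v" using 1 by (simp add: algebra_simps)
      then have "II (T v + v) = II x + (II v + II v)" by (simp add: scaleC_add_right)
      also have "II v + II v = scaleC (2*\<i>) v" by (simp add: sc2)
      also have "\<dots> = ?y" by (rule 2)
      finally have "II (T v + v) = z" by simp
      then show "p \<in> {(T v - v, II (T v + v)) | v. True}" using 1 p by blast
    qed
  next
    show "{(T v - v, II (T v + v)) | v. True} \<subseteq> B"
    proof
      fix p assume "p \<in> {(T v - v, II (T v + v)) | v. True}"
      then obtain v where p: "p = (T v - v, II (T v + v))" by blast
      have "(scaleC (2*\<i>) (Rp v), scaleC (2*\<i>) (v + scaleC \<i> (Rp v))) \<in> B"
        by (rule op_scale[OF Bop Rp(2)])
      moreover have "T v - v = scaleC (2*\<i>) (Rp v)" unfolding T_def by simp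
      moreover have "II (T v + v) = scaleC (2*\<i>) (v + scaleC \<i> (Rp v))"
      proof -
        have "T v + v = (v + v) + scaleC (2*\<i>) (Rp v)" unfolding T_def by (simp add: algebra_simps)
        then have "II (T v + v) = (II v + II v) + scaleC (\<i> * (2*\<i>)) (Rp v)"
          by (simp only: scaleC_add_right scaleC_scaleC)
        also have "II v + II v = scaleC (2*\<i>) v" by (rule sc2[symmetric])
        also have "\<i> * (2*\<i>) = 2*\<i> * \<i>" by simp
        also have "scaleC (2*\<i>) v + scaleC (2*\<i> * \<i>) (Rp v) = scaleC (2*\<i>) (v + scaleC \<i> (Rp v))"
          by (simp only: scaleC_add_right scaleC_scaleC)
        finally show ?thesis .
      qed
      ultimately show "p \<in> B" unfolding p by simp
    qed
  qed
  have "B = {(x, y). (Z x, Z y) \<in> HU}"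
  proof
    show "B \<subseteq> {(x, y). (Z x, Z y) \<in> HU}"
    proof
      fix p assume "p \<in> B"
      then obtain v where p: "p = (T v - v, II (T v + v))" using Bchar by blast
      have "(Z (T v - v), Z (II (T v + v))) = (U (Z v) - Z v, II (U (Z v) + Z v))"
        by (simp add: bcl_diff[OF Zb] bcl_add[OF Zb] bcl_scaleC[OF Zb] ZT)
      then show "p \<in> {(x, y). (Z x, Z y) \<in> HU}" unfolding p HU_def by auto
    qed
  next
    show "{(x, y). (Z x, Z y) \<in> HU} \<subseteq> B"
    proof
      fix p assume "p \<in> {(x, y). (Z x, Z y) \<in> HU}"
      then obtain x y where p: "p = (x, y)" and h: "(Z x, Z y) \<in> HU" by blast
      then obtain u where u: "Z x = U u - u" "Z y = II (U u + u)" unfolding HU_def by blast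
      define v where "v = Z' u"
      have Zv: "Z v = u" unfolding v_def by (rule ZZ')
      have "Z (T v - v) = Z x" using u by (simp add: bcl_diff[OF Zb] ZT Zv)
      then have 1: "T v - v = x" by (rule Zinj)
      have "Z (II (T v + v)) = Z y" using u by (simp add: bcl_add[OF Zb] bcl_scaleC[OF Zb] ZT Zv)
      then have 2: "II (T v + v) = y" by (rule Zinj)
      show "p \<in> B" using Bchar 1 2 p by blast
    qed
  qed
  then show ?thesis unfolding similar_to_self_adjoint_def
    using Zb Zbij Z'b invZ HU_sa by blast
qed

end


theorem corollary3p10:
  fixes U :: "'a::chilbert \<Rightarrow> 'a" and W0 :: "'a set"
    and J :: "'a \<Rightarrow> 'a" and B :: "'a lop"
  assumes "bilateral_shift U W0"
    and "has_cdim W0 2"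
    and "fundamental_symmetry J"
    and "commutes_with J (phillips_op U W0)"
    and "phillips_op U W0 \<subseteq> B"
    and "J_self_adjoint J B"
  shows "similar_to_self_adjoint B \<longleftrightarrow> op_spectrum B \<subseteq> \<real>"
proof -
  have P: "phil U W0"
    using assms(1) unfolding bilateral_shift_def
    by (intro phil.intro unitary.intro phil_axioms.intro) auto
  show ?thesis
  proof
    assume "similar_to_self_adjoint B"
    then show "op_spectrum B \<subseteq> \<real>" by (rule similar_real_spectrum)
  next
    assume "op_spectrum B \<subseteq> \<real>"
    then show "similar_to_self_adjoint B"
      by (rule phil.direction2[OF P assms(3) assms(4) assms(5) assms(6)])
  qed
qed

end
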